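(* Let $s\in\mathbb{R}$ and let $f:\mathbb{R}^n\to\overline{\mathbb{R}}$ be variationally $s$-convex at $\bar x\in\operatorname{dom}f$ for $\bar v\in\partial f(\bar x)$. Then there exist $\varepsilon>0$ and the $f$-attentive $\varepsilon$-localization $T_\varepsilon$ of $\partial f$ around $(\bar x,\bar v)$ such that $d^2f(x|v)(w)\ge s\|w\|^2$ for all $(x,v)\in\operatorname{gph}T_\varepsilon$ and all $w\in\mathbb{R}^n$.
   Context: $f$ is proper l.s.c.; $\partial f$ is the limiting subdifferential. Variational $s$-convexity at $\bar x$ for $\bar v$: $f(\bar x)$ finite and there exist a function $\hat f$ with $\hat f-\frac s2\|\cdot\|^2$ convex, convex neighborhoods $U\ni\bar x$, $V\ni\bar v$ and $\varepsilon>0$ with $\hat f\le f$ on $U$, $(U\times V)\cap\operatorname{gph}\partial\hat f=(U_\varepsilon\times V)\cap\operatorname{gph}\partial f$ ($U_\varepsilon=\{x\in U:f(x)<f(\bar x)+\varepsilon\}$), and $\hat f=f$ at common elements. $\operatorname{gph}T_\varepsilon=\{(x,v)\in\operatorname{gph}\partial f:\|x-\bar x\|<\varepsilon,\|v-\bar v\|<\varepsilon,f(x)<f(\bar x)+\varepsilon\}$. $d^2f(x|v)(w)=\liminf_{t\downarrow0,w'\to w}\frac{f(x+tw')-f(x)-t\langle v,w'\rangle}{\frac12t^2}$. *)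

theory Defs
  imports "HOL-Analysis.Analysis"
begin

definition edom :: "(real^'n \<Rightarrow> ereal) \<Rightarrow> (real^'n) set" where
  "edom f = {x. f x < \<infinity>}"

definition proper_fun :: "(real^'n \<Rightarrow> ereal) \<Rightarrow> bool" where
  "proper_fun f \<longleftrightarrow> (\<forall>x. f x \<noteq> -\<infinity>) \<and> (\<exists>x. f x \<noteq> \<infinity>)"

definition lsc_fun :: "(real^'n \<Rightarrow> ereal) \<Rightarrow> bool" where
  "lsc_fun f \<longleftrightarrow> (\<forall>x c. c < f x \<longrightarrow> (\<forall>\<^sub>F y in nhds x. c < f y))"

definition econvex :: "(real^'n \<Rightarrow> ereal) \<Rightarrow> bool" where
  "econvex g \<longleftrightarrow> convex {(x, r::real). g x \<le> ereal r}"

(* regular (Frechet) subdifferential: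
   v \<in> \<partial>^ f(x) iff f x finite and
   liminf_{x'\<rightarrow>x, x'\<noteq>x} (f x' - f x - <v, x'-x>) / |x'-x| \<ge> 0 (written in eps-delta form) *)
definition regular_subdiff :: "(real^'n \<Rightarrow> ereal) \<Rightarrow> real^'n \<Rightarrow> (real^'n) set" where
  "regular_subdiff f x = {v. \<bar>f x\<bar> \<noteq> \<infinity> \<and>
     (\<forall>e>0. \<exists>d>0. \<forall>y. norm (y - x) < d \<longrightarrow>
        f y \<ge> f x + ereal (v \<bullet> (y - x) - e * norm (y - x)))}"

definition limiting_subdiff :: "(real^'n \<Rightarrow> ereal) \<Rightarrow> real^'n \<Rightarrow> (real^'n) set" where
  "limiting_subdiff f x = {v. \<bar>f x\<bar> \<noteq> \<infinity> \<and>
     (\<exists>xs vs. xs \<longlonglongrightarrow> x \<and> (\<lambda>k. f (xs k)) \<longlonglongrightarrow> f x \<and> vs \<longlonglongrightarrow> v \<and>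
        (\<forall>k. vs k \<in> regular_subdiff f (xs k)))}"

definition gph_subdiff :: "(real^'n \<Rightarrow> ereal) \<Rightarrow> ((real^'n) \<times> (real^'n)) set" where
  "gph_subdiff f = {(x, v). v \<in> limiting_subdiff f x}"

definition var_s_convex ::
  "real \<Rightarrow> (real^'n \<Rightarrow> ereal) \<Rightarrow> real^'n \<Rightarrow> real^'n \<Rightarrow> bool" where
  "var_s_convex s f xb vb \<longleftrightarrow> \<bar>f xb\<bar> \<noteq> \<infinity> \<and>
     (\<exists>fh U V e. econvex (\<lambda>x. fh x - ereal (s / 2 * (norm x)\<^sup>2)) \<and>
        convex U \<and> convex V \<and> xb \<in> interior U \<and> vb \<in> interior V \<and> e > 0 \<and>
        (\<forall>x\<in>U. fh x \<le> f x) \<and>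
        (U \<times> V) \<inter> gph_subdiff fh
          = ({x\<in>U. f x < f xb + ereal e} \<times> V) \<inter> gph_subdiff f \<and>
        (\<forall>(x, v) \<in> (U \<times> V) \<inter> gph_subdiff fh. fh x = f x))"

definition gph_attentive_loc ::
  "(real^'n \<Rightarrow> ereal) \<Rightarrow> real^'n \<Rightarrow> real^'n \<Rightarrow> real \<Rightarrow> ((real^'n) \<times> (real^'n)) set" where
  "gph_attentive_loc f xb vb e = {(x, v). v \<in> limiting_subdiff f x \<and>
     norm (x - xb) < e \<and> norm (v - vb) < e \<and> f x < f xb + ereal e}"

definition second_subderiv ::
  "(real^'n \<Rightarrow> ereal) \<Rightarrow> real^'n \<Rightarrow> real^'n \<Rightarrow> real^'n \<Rightarrow> ereal" where
  "second_subderiv f x v w =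
     Liminf (at_right (0::real) \<times>\<^sub>F nhds w)
       (\<lambda>(t, w'). (f (x + t *\<^sub>R w') - f x - ereal (t * (v \<bullet> w'))) / ereal (t\<^sup>2 / 2))"

end

theory Submission
  imports Defs
begin

lemma le_by_eps:
  fixes L B K :: real
  assumes "K \<ge> 0" and "\<And>e. e > 0 \<Longrightarrow> L \<le> B + e * K"
  shows "L \<le> B"
proof (rule field_le_epsilon)
  fix d :: real assume d: "d > 0"
  have "d / (K + 1) > 0" using assms(1) d by simp
  hence "L \<le> B + (d / (K + 1)) * K" using assms(2) by blast
  also have "(d / (K + 1)) * K \<le> d"
    using assms(1) d by (simp add: field_simps)
  finally show "L \<le> B + d" by simp
qed

lemma ereal_minus_le_shift:
  fixes A :: ereal
  assumes "A - ereal c \<le> ereal r"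
  shows "A \<le> ereal (r + c)"
  using assms by (cases A) auto

lemma norm_comb:
  fixes x y :: "real^'n" and t :: real
  shows "(norm (x + t *\<^sub>R (y - x)))\<^sup>2 =
     (1 - t) * (norm x)\<^sup>2 + t * (norm y)\<^sup>2 - t * (1 - t) * (norm (y - x))\<^sup>2"
  by (simp add: power2_norm_eq_inner inner_add_left inner_add_right inner_diff_left
      inner_diff_right inner_commute algebra_simps)

lemma reg_ineq:
  fixes g :: "real^'n \<Rightarrow> ereal"
  assumes cv: "econvex (\<lambda>x. g x - ereal (s / 2 * (norm x)\<^sup>2))"
    and u: "u \<in> regular_subdiff g x" and ga: "g x = ereal a"
  shows "g y \<ge> ereal (a + u \<bullet> (y - x) + s / 2 * (norm (y - x))\<^sup>2)"
proof -
  let ?L = "a + u \<bullet> (y - x) + s / 2 * (norm (y - x))\<^sup>2"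
  let ?S = "{(x, r::real). g x - ereal (s / 2 * (norm x)\<^sup>2) \<le> ereal r}"
  have S: "convex ?S" using cv unfolding econvex_def by simp
  have reg: "\<forall>e>0. \<exists>d>0. \<forall>y. norm (y - x) < d \<longrightarrow>
        g y \<ge> g x + ereal (u \<bullet> (y - x) - e * norm (y - x))"
    using u unfolding regular_subdiff_def by simp
  have key: "?L \<le> B" if gB: "g y \<le> ereal B" for B
  proof (rule le_by_eps)
    let ?K = "norm (y - x) + \<bar>s\<bar> / 2 * (norm (y - x))\<^sup>2"
    show "?K \<ge> 0" by simp
    fix e :: real assume e: "e > 0"
    obtain d where d: "d > 0" and dd: "\<And>z. norm (z - x) < d \<Longrightarrow>
        g z \<ge> g x + ereal (u \<bullet> (z - x) - e * norm (z - x))"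
      using reg e by blast
    define t where "t = min 1 (min e (d / (norm (y - x) + 1))) / 2"
    have "d / (norm (y - x) + 1) > 0" using d by (simp add: add_nonneg_pos)
    hence t0: "t > 0" using e by (simp add: t_def)
    have t1: "t \<le> 1" and te: "t \<le> e" using e d by (auto simp: t_def)
    have "t * norm (y - x) \<le> (d / (norm (y - x) + 1)) / 2 * norm (y - x)"
    proof (rule mult_right_mono)
      show "t \<le> (d / (norm (y - x) + 1)) / 2"
        unfolding t_def by (rule divide_right_mono) auto
    qed (rule norm_ge_zero)
    also have "\<dots> < d"
    proof -
      have q: "norm (y - x) / (norm (y - x) + 1) \<le> 1" by (simp add: add_nonneg_pos)
      have "(d / (norm (y - x) + 1)) / 2 * norm (y - x) = d * (norm (y - x) / (norm (y - x) + 1)) / 2"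
        by simp
      also have "\<dots> \<le> d * 1 / 2" using q d by (intro divide_right_mono mult_left_mono) auto
      also have "\<dots> < d" using d by simp
      finally show ?thesis .
    qed
    finally have tn: "t * norm (y - x) < d" .
    define z where "z = x + t *\<^sub>R (y - x)"
    have nz: "norm (z - x) = t * norm (y - x)" using t0 by (simp add: z_def)
    have low: "g z \<ge> ereal (a + t * (u \<bullet> (y - x)) - e * (t * norm (y - x)))"
      using dd[of z] tn nz ga by (simp add: z_def inner_scaleR_right algebra_simps)
    have p1: "(x, a - s / 2 * (norm x)\<^sup>2) \<in> ?S" using ga by simp
    have "g y - ereal (s / 2 * (norm y)\<^sup>2) \<le> ereal B - ereal (s / 2 * (norm y)\<^sup>2)"
      using gB by (intro ereal_minus_mono) auto
    hence p2: "(y, B - s / 2 * (norm y)\<^sup>2) \<in> ?S" by simp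
    have "(1 - t) *\<^sub>R (x, a - s / 2 * (norm x)\<^sup>2) + t *\<^sub>R (y, B - s / 2 * (norm y)\<^sup>2) \<in> ?S"
      using convexD[OF S p1 p2, of "1 - t" t] t0 t1 by simp
    moreover have "(1 - t) *\<^sub>R x + t *\<^sub>R y = z" by (simp add: z_def algebra_simps)
    ultimately have "g z - ereal (s / 2 * (norm z)\<^sup>2) \<le>
        ereal ((1 - t) * (a - s / 2 * (norm x)\<^sup>2) + t * (B - s / 2 * (norm y)\<^sup>2))"
      by simp
    hence "g z \<le> ereal ((1 - t) * (a - s / 2 * (norm x)\<^sup>2) + t * (B - s / 2 * (norm y)\<^sup>2)
        + s / 2 * (norm z)\<^sup>2)"
      by (rule ereal_minus_le_shift)
    with low have "ereal (a + t * (u \<bullet> (y - x)) - e * (t * norm (y - x))) \<le>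
        ereal ((1 - t) * (a - s / 2 * (norm x)\<^sup>2) + t * (B - s / 2 * (norm y)\<^sup>2)
        + s / 2 * (norm z)\<^sup>2)" by (rule order_trans)
    hence ineq: "a + t * (u \<bullet> (y - x)) - e * (t * norm (y - x)) \<le>
        (1 - t) * (a - s / 2 * (norm x)\<^sup>2) + t * (B - s / 2 * (norm y)\<^sup>2)
        + s / 2 * (norm z)\<^sup>2" by (simp only: ereal_less_eq)
    have "(1 - t) * (a - s / 2 * (norm x)\<^sup>2) + t * (B - s / 2 * (norm y)\<^sup>2)
        + s / 2 * (norm z)\<^sup>2 = (1 - t) * a + t * B - s / 2 * (t * (1 - t) * (norm (y - x))\<^sup>2)"
      unfolding z_def norm_comb by (simp add: field_simps)
    with ineq have "t * (u \<bullet> (y - x)) - e * (t * norm (y - x)) \<le>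
        t * (B - a) - t * (s / 2 * ((1 - t) * (norm (y - x))\<^sup>2))"
      by (simp add: algebra_simps)
    hence "t * (u \<bullet> (y - x) - e * norm (y - x)) \<le> t * (B - a - s / 2 * ((1 - t) * (norm (y - x))\<^sup>2))"
      by (simp add: algebra_simps)
    hence i2: "u \<bullet> (y - x) - e * norm (y - x) \<le> B - a - s / 2 * ((1 - t) * (norm (y - x))\<^sup>2)"
      using t0 by (rule mult_left_le_imp_le)
    have "s / 2 * t * (norm (y - x))\<^sup>2 \<le> \<bar>s\<bar> / 2 * t * (norm (y - x))\<^sup>2"
    proof -
      have X: "0 \<le> t * (norm (y - x))\<^sup>2" using t0 by simp
      have "s / 2 \<le> \<bar>s\<bar> / 2" by simp
      hence "s / 2 * (t * (norm (y - x))\<^sup>2) \<le> \<bar>s\<bar> / 2 * (t * (norm (y - x))\<^sup>2)"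
        using X by (rule mult_right_mono)
      thus ?thesis by (simp add: mult.assoc)
    qed
    also have "\<dots> \<le> \<bar>s\<bar> / 2 * e * (norm (y - x))\<^sup>2"
      using te by (intro mult_right_mono mult_left_mono) auto
    finally have i3: "s / 2 * t * (norm (y - x))\<^sup>2 \<le> \<bar>s\<bar> / 2 * e * (norm (y - x))\<^sup>2" .
    from i2 i3 show "?L \<le> B + e * ?K" by (simp add: algebra_simps)
  qed
  show ?thesis
  proof (cases "g y")
    case (real b) thus ?thesis using key[of b] by simp
  next
    case PInf thus ?thesis by simp
  next
    case MInf thus ?thesis using key[of "?L - 1"] by simp
  qed
qed


lemma lim_ineq:
  fixes g :: "real^'n \<Rightarrow> ereal"
  assumes cv: "econvex (\<lambda>x. g x - ereal (s / 2 * (norm x)\<^sup>2))"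
    and v: "v \<in> limiting_subdiff g x"
  shows "\<exists>a. g x = ereal a \<and>
     (\<forall>y. g y \<ge> ereal (a + v \<bullet> (y - x) + s / 2 * (norm (y - x))\<^sup>2))"
proof -
  from v obtain xs vs where fin: "\<bar>g x\<bar> \<noteq> \<infinity>" and xs: "xs \<longlonglongrightarrow> x"
    and gxs: "(\<lambda>k. g (xs k)) \<longlonglongrightarrow> g x" and vs: "vs \<longlonglongrightarrow> v"
    and reg: "\<And>k. vs k \<in> regular_subdiff g (xs k)"
    unfolding limiting_subdiff_def mem_Collect_eq apply (elim conjE exE) by (rule that) (assumption | blast)+
  obtain a where ga: "g x = ereal a" using fin by (cases "g x") auto
  define ak where "ak k = real_of_ereal (g (xs k))" for k
  have gak: "g (xs k) = ereal (ak k)" for k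
    using reg[of k] unfolding regular_subdiff_def ak_def by (cases "g (xs k)") auto
  have "(\<lambda>k. ereal (ak k)) \<longlonglongrightarrow> ereal a" using gxs ga gak by simp
  hence ak: "ak \<longlonglongrightarrow> a" by (simp add: lim_ereal)
  have "\<forall>y. g y \<ge> ereal (a + v \<bullet> (y - x) + s / 2 * (norm (y - x))\<^sup>2)"
  proof
    fix y
    have c: "(\<lambda>k. ak k + vs k \<bullet> (y - xs k) + s / 2 * (norm (y - xs k))\<^sup>2)
        \<longlonglongrightarrow> a + v \<bullet> (y - x) + s / 2 * (norm (y - x))\<^sup>2"
      by (intro tendsto_intros ak vs xs)
    hence c': "(\<lambda>k. ereal (ak k + vs k \<bullet> (y - xs k) + s / 2 * (norm (y - xs k))\<^sup>2))
        \<longlonglongrightarrow> ereal (a + v \<bullet> (y - x) + s / 2 * (norm (y - x))\<^sup>2)"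
      by (simp add: lim_ereal)
    have b: "\<And>k. ereal (ak k + vs k \<bullet> (y - xs k) + s / 2 * (norm (y - xs k))\<^sup>2) \<le> g y"
      using reg_ineq[OF cv reg gak] by blast
    show "g y \<ge> ereal (a + v \<bullet> (y - x) + s / 2 * (norm (y - x))\<^sup>2)"
      by (rule tendsto_le[OF trivial_limit_sequentially tendsto_const c']) (rule always_eventually, rule allI, rule b)
  qed
  with ga show ?thesis by blast
qed

lemma ssd_bound:
  fixes f :: "real^'n \<Rightarrow> ereal"
  assumes fx: "f x = ereal a" and r: "r > 0"
    and bd: "\<And>y. norm (y - x) < r \<Longrightarrow> f y \<ge> ereal (a + v \<bullet> (y - x) + s / 2 * (norm (y - x))\<^sup>2)"
  shows "second_subderiv f x v w \<ge> ereal (s * (norm w)\<^sup>2)"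
proof -
  let ?F = "at_right (0::real) \<times>\<^sub>F nhds w"
  let ?Q = "\<lambda>(t, w'). (f (x + t *\<^sub>R w') - f x - ereal (t * (v \<bullet> w'))) / ereal (t\<^sup>2 / 2)"
  let ?G = "\<lambda>p. ereal (s * (norm (snd p))\<^sup>2)"
  have nb: "?F \<noteq> bot" by (simp add: prod_filter_eq_bot)
  have "((\<lambda>p. s * (norm (snd p))\<^sup>2) \<longlongrightarrow> s * (norm w)\<^sup>2) ?F"
    by (intro tendsto_intros filterlim_snd)
  hence lim: "(?G \<longlongrightarrow> ereal (s * (norm w)\<^sup>2)) ?F" by (simp add: lim_ereal)
  define b where "b = r / (norm w + 1)"
  have b0: "b > 0" using r by (simp add: b_def add_nonneg_pos)
  have ev: "\<forall>\<^sub>F p in ?F. ?G p \<le> ?Q p"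
    unfolding eventually_prod_filter
  proof (intro exI conjI allI impI)
    show "eventually (\<lambda>t. 0 < t \<and> t < b) (at_right (0::real))"
      using eventually_at_right_real[OF b0] by (simp add: greaterThanLessThan_iff)
    show "eventually (\<lambda>w'. dist w' w < 1) (nhds w)"
      using eventually_nhds_metric by (metis zero_less_one)
    fix t :: real and w' :: "real^'n"
    assume t: "0 < t \<and> t < b" and w': "dist w' w < 1"
    have nw: "norm w' \<le> norm w + 1" using w' norm_triangle_ineq2[of w' w]
      by (simp add: dist_norm)
    have "norm (t *\<^sub>R w') = t * norm w'" using t by simp
    also have "\<dots> \<le> t * (norm w + 1)" using t nw by (intro mult_left_mono) auto
    also have "\<dots> < b * (norm w + 1)" using t by (intro mult_strict_right_mono) (auto simp: add_nonneg_pos)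
    also have "\<dots> = r"
    proof -
      have "norm w + 1 \<noteq> 0" using norm_ge_zero[of w] by linarith
      thus ?thesis by (simp add: b_def)
    qed
    finally have "norm ((x + t *\<^sub>R w') - x) < r" by simp
    hence fy: "f (x + t *\<^sub>R w') \<ge> ereal (a + t * (v \<bullet> w') + s / 2 * (t\<^sup>2 * (norm w')\<^sup>2))"
      using bd[of "x + t *\<^sub>R w'"] t
      by (simp add: power_mult_distrib)
    have "ereal (a + t * (v \<bullet> w') + s / 2 * (t\<^sup>2 * (norm w')\<^sup>2)) - ereal a - ereal (t * (v \<bullet> w'))
        \<le> f (x + t *\<^sub>R w') - f x - ereal (t * (v \<bullet> w'))"
      using fy fx by (intro ereal_minus_mono) auto
    hence num: "ereal (s / 2 * (t\<^sup>2 * (norm w')\<^sup>2)) \<le> f (x + t *\<^sub>R w') - f x - ereal (t * (v \<bullet> w'))"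
      by simp
    have pos: "0 < ereal (t\<^sup>2 / 2)" using t by simp
    have "ereal (s / 2 * (t\<^sup>2 * (norm w')\<^sup>2)) / ereal (t\<^sup>2 / 2)
        \<le> (f (x + t *\<^sub>R w') - f x - ereal (t * (v \<bullet> w'))) / ereal (t\<^sup>2 / 2)"
      by (rule ereal_divide_right_mono[OF num pos])
    moreover have "ereal (s / 2 * (t\<^sup>2 * (norm w')\<^sup>2)) / ereal (t\<^sup>2 / 2) = ereal (s * (norm w')\<^sup>2)"
      using t by (simp add: divide_ereal_def field_simps)
    ultimately show "?G (t, w') \<le> ?Q (t, w')" by simp
  qed
  have "ereal (s * (norm w)\<^sup>2) = Liminf ?F ?G" using lim_imp_Liminf[OF nb lim] by simp
  also have "\<dots> \<le> Liminf ?F ?Q" by (rule Liminf_mono[OF ev])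
  finally show ?thesis unfolding second_subderiv_def .
qed

theorem corollary3p6:
  fixes s :: real and f :: "real^'n \<Rightarrow> ereal" and xb vb :: "real^'n"
  assumes "proper_fun f" and "lsc_fun f"
    and "xb \<in> edom f" and "vb \<in> limiting_subdiff f xb"
    and "var_s_convex s f xb vb"
  shows "\<exists>e>0. \<forall>(x, v) \<in> gph_attentive_loc f xb vb e. \<forall>w.
           second_subderiv f x v w \<ge> ereal (s * (norm w)\<^sup>2)"
proof -
  from assms(5) obtain fh U V e0 where fin: "\<bar>f xb\<bar> \<noteq> \<infinity>"
    and cv: "econvex (\<lambda>x. fh x - ereal (s / 2 * (norm x)\<^sup>2))"
    and iU: "xb \<in> interior U" and iV: "vb \<in> interior V" and e0: "e0 > 0"
    and le: "\<forall>x\<in>U. fh x \<le> f x"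
    and eq: "(U \<times> V) \<inter> gph_subdiff fh = ({x\<in>U. f x < f xb + ereal e0} \<times> V) \<inter> gph_subdiff f"
    and same: "\<forall>(x, v) \<in> (U \<times> V) \<inter> gph_subdiff fh. fh x = f x"
    using assms(5) unfolding var_s_convex_def apply (elim conjE exE) by (rule that) (assumption+)
  obtain r1 where r1: "r1 > 0" "ball xb r1 \<subseteq> U" using iU mem_interior by blast
  obtain r2 where r2: "r2 > 0" "ball vb r2 \<subseteq> V" using iV mem_interior by blast
  define ep where "ep = min (r1 / 2) (min r2 e0)"
  have ep0: "ep > 0" using r1 r2 e0 by (simp add: ep_def)
  show ?thesis
  proof (intro exI conjI ballI)
    show "ep > 0" by (rule ep0)
    fix p assume p: "p \<in> gph_attentive_loc f xb vb ep"
    obtain x v where pxv: "p = (x, v)" by (cases p)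
    from p pxv have v: "v \<in> limiting_subdiff f x" and nx: "norm (x - xb) < ep"
      and nv: "norm (v - vb) < ep" and fxl: "f x < f xb + ereal ep"
      unfolding gph_attentive_loc_def by auto
    have xU: "x \<in> U" using r1 nx by (auto simp: ep_def dist_norm norm_minus_commute)
    have vV: "v \<in> V" using r2 nv by (auto simp: ep_def dist_norm norm_minus_commute)
    have "ep \<le> e0" by (simp add: ep_def)
    hence "f xb + ereal ep \<le> f xb + ereal e0" by (intro add_left_mono) simp
    with fxl have fxl': "f x < f xb + ereal e0" by simp
    have "(x, v) \<in> ({x\<in>U. f x < f xb + ereal e0} \<times> V) \<inter> gph_subdiff f"
      using xU vV fxl' v by (simp add: gph_subdiff_def)
    hence inh: "(x, v) \<in> (U \<times> V) \<inter> gph_subdiff fh" using eq by simp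
    hence fhx: "fh x = f x" using same by blast
    from inh have vh: "v \<in> limiting_subdiff fh x" by (simp add: gph_subdiff_def)
    obtain a where fha: "fh x = ereal a" and ineq:
      "\<And>y. fh y \<ge> ereal (a + v \<bullet> (y - x) + s / 2 * (norm (y - x))\<^sup>2)"
      using lim_ineq[OF cv vh] by blast
    have r1h: "r1 / 2 > 0" using r1 by simp
    have "second_subderiv f x v w \<ge> ereal (s * (norm w)\<^sup>2)" for w
    proof (rule ssd_bound[OF _ r1h])
      show "f x = ereal a" using fha fhx by simp
      fix y assume y: "norm (y - x) < r1 / 2"
      have "norm (y - xb) \<le> norm (y - x) + norm (x - xb)"
        using norm_triangle_ineq[of "y - x" "x - xb"] by simp
      also have "\<dots> < r1" using y nx by (simp add: ep_def)
      finally have "y \<in> U" using r1 by (auto simp: dist_norm norm_minus_commute)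
      hence "fh y \<le> f y" using le by blast
      with ineq[of y] show "f y \<ge> ereal (a + v \<bullet> (y - x) + s / 2 * (norm (y - x))\<^sup>2)"
        by (rule order_trans)
    qed
    thus "case p of (x, v) \<Rightarrow> \<forall>w. second_subderiv f x v w \<ge> ereal (s * (norm w)\<^sup>2)"
      using pxv by simp
  qed
qed

end
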